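(* Let $m\ge 2$ be an integer. Then, as formal power series in $q$ (equivalently, for $|q|<1$), $$\sum_{n=1}^\infty \frac{q^n\left(1-q^{(m-1)n}\right)(q^{mn};q^m)_\infty}{(1-q^n)\,(q^{n+1};q)_{(m-1)n}\,(q^{mn};q)_\infty} = -1 + \frac{(q^m;q^m)_\infty}{(q;q)_\infty}.$$
   Context: Standard $q$-Pochhammer notation: $(a;q)_n=(1-a)(1-aq)\cdots(1-aq^{n-1})$ and $(a;q)_\infty=\prod_{k=0}^\infty(1-aq^k)$. *)

theory Defs
  imports "HOL-Analysis.Analysis"
begin

definition qpoch :: "complex \<Rightarrow> complex \<Rightarrow> nat \<Rightarrow> complex" where
  "qpoch a q n = (\<Prod>k<n. (1 - a * q ^ k))"

definition qpoch_inf :: "complex \<Rightarrow> complex \<Rightarrow> complex" where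
  "qpoch_inf a q = (\<Prod>k. (1 - a * q ^ k))"

end

theory Submission
  imports Defs
begin

definition PF :: "complex \<Rightarrow> nat \<Rightarrow> complex" where
  "PF r n = (\<Prod>k. 1 - r ^ Suc (k + n))"

lemma F_conv:
  fixes r :: complex
  assumes "norm r < 1"
  shows "convergent_prod (\<lambda>k. 1 - r ^ Suc k)"
proof -
  have "summable (\<lambda>k. norm r * norm r ^ k)"
    by (rule summable_mult, rule summable_geometric) (use assms in simp)
  moreover have "norm ((1 - r ^ Suc k) - 1) = norm r * norm r ^ k" for k
    by (simp only: diff_diff_cancel minus_diff_eq norm_minus_cancel norm_power power_Suc norm_mult diff_0 diff_add_cancel)
       (simp add: norm_mult norm_power)
  ultimately have "summable (\<lambda>k. norm ((1 - r ^ Suc k) - 1))" by simp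
  hence "abs_convergent_prod (\<lambda>k. 1 - r ^ Suc k)"
    by (rule summable_imp_abs_convergent_prod)
  thus ?thesis by (rule abs_convergent_prod_imp_convergent_prod)
qed

lemma F_nz:
  fixes r :: complex
  assumes "norm r < 1"
  shows "1 - r ^ Suc k \<noteq> 0"
proof
  assume "1 - r ^ Suc k = 0"
  hence "r ^ Suc k = 1" by simp
  hence "norm (r ^ Suc k) = 1" by simp
  moreover have "norm r ^ Suc k \<le> norm r ^ 1"
    by (rule power_decreasing) (use assms in auto)
  ultimately show False using assms by (simp only: norm_power power_one_right)
qed

lemma PF_conv:
  fixes r :: complex
  assumes "norm r < 1"
  shows "convergent_prod (\<lambda>k. 1 - r ^ Suc (k + n))"
  using convergent_prod_ignore_initial_segment[OF F_conv[OF assms], where m=n] by simp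

lemma PF_nz:
  fixes r :: complex
  assumes "norm r < 1"
  shows "PF r n \<noteq> 0"
  unfolding PF_def by (rule prodinf_nonzero[OF PF_conv[OF assms]]) (rule F_nz[OF assms])

lemma PF_Suc:
  fixes r :: complex
  assumes "norm r < 1"
  shows "PF r n = (1 - r ^ Suc n) * PF r (Suc n)"
proof -
  have "PF r (Suc n) = PF r n / (1 - r ^ Suc n)"
    using prodinf_split_head[OF PF_conv[OF assms, of n]] F_nz[OF assms, of n]
    by (simp add: PF_def)
  thus ?thesis using F_nz[OF assms, of n] by simp
qed

lemma PF_split:
  fixes r :: complex
  assumes "norm r < 1"
  shows "PF r n = (\<Prod>k<d. 1 - r ^ Suc (k + n)) * PF r (n + d)"
proof (induction d)
  case 0 then show ?case by simp
next
  case (Suc d)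
  then show ?case using PF_Suc[OF assms, of "n + d"] by (simp add: ac_simps)
qed

lemma PF_lim:
  fixes r :: complex
  assumes "norm r < 1"
  shows "PF r \<longlonglongrightarrow> 1"
proof -
  let ?f = "\<lambda>k. 1 - r ^ Suc k"
  have eq: "PF r n = prodinf ?f / (\<Prod>k<n. ?f k)" for n
    unfolding PF_def
    using prodinf_divide_initial_segment[OF F_conv[OF assms], of n] F_nz[OF assms]
    by simp
  have "(\<lambda>n. \<Prod>k\<le>n. ?f k) \<longlonglongrightarrow> prodinf ?f"
    by (rule convergent_prod_LIMSEQ[OF F_conv[OF assms]])
  hence "(\<lambda>n. \<Prod>k<n. ?f k) \<longlonglongrightarrow> prodinf ?f"
    by (simp add: LIMSEQ_lessThan_iff_atMost)
  moreover have nz: "prodinf ?f \<noteq> 0"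
    by (rule prodinf_nonzero[OF F_conv[OF assms]]) (rule F_nz[OF assms])
  ultimately have "(\<lambda>n. prodinf ?f / (\<Prod>k<n. ?f k)) \<longlonglongrightarrow> prodinf ?f / prodinf ?f"
    by (intro tendsto_intros) auto
  moreover have "PF r = (\<lambda>n. prodinf ?f / (\<Prod>k<n. ?f k))" by (rule ext) (rule eq)
  ultimately show ?thesis using nz by simp
qed

lemma alg:
  fixes a b X Y :: complex
  assumes "Y \<noteq> 0" "1 - a \<noteq> 0" "1 - a * b \<noteq> 0"
  shows "a * (1 - b) * ((1 - a * b) * X) / ((1 - a * b) * ((1 - a) * Y))
       = ((1 - a * b) * X) / ((1 - a) * Y) - X / Y"
proof -
  have "a * (1 - b) * ((1 - a * b) * X) / ((1 - a * b) * ((1 - a) * Y)) = a * (1 - b) * X / ((1 - a) * Y)"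
    using assms by simp
  also have "\<dots> = ((1 - a * b) * X) / ((1 - a) * Y) - X / Y"
    using assms by (simp add: field_simps)
  finally show ?thesis .
qed

theorem corollary7:
  fixes m :: nat and q :: complex
  assumes "m \<ge> 2" and "norm q < 1"
  shows "(\<lambda>i. let n = Suc i in
            q ^ n * (1 - q ^ ((m - 1) * n)) * qpoch_inf (q ^ (m * n)) (q ^ m)
            / ((1 - q ^ n) * qpoch (q ^ (n + 1)) q ((m - 1) * n) * qpoch_inf (q ^ (m * n)) q))
         sums (-1 + qpoch_inf (q ^ m) (q ^ m) / qpoch_inf q q)"
proof -
  have qm: "norm (q ^ m) < 1"
    using assms by (simp add: norm_power power_less_one_iff)
  define A where "A i = PF (q ^ m) i / PF q i" for i
  have lim: "A \<longlonglongrightarrow> 1 / 1"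
    unfolding A_def by (intro tendsto_intros PF_lim qm assms(2)) simp
  have tel: "(\<lambda>i. A i - A (Suc i)) sums (A 0 - 1)"
    using telescope_sums'[OF lim] by simp
  have A0: "A 0 = qpoch_inf (q ^ m) (q ^ m) / qpoch_inf q q"
    unfolding A_def PF_def qpoch_inf_def by (simp add: power_commutes)
  have tm: "(let n = Suc i in
            q ^ n * (1 - q ^ ((m - 1) * n)) * qpoch_inf (q ^ (m * n)) (q ^ m)
            / ((1 - q ^ n) * qpoch (q ^ (n + 1)) q ((m - 1) * n) * qpoch_inf (q ^ (m * n)) q))
        = A i - A (Suc i)" for i
  proof -
    define n where "n = Suc i"
    define d where "d = (m - 1) * n"
    have mn: "m * n = n + d" using assms(1) unfolding d_def
      by (metis Suc_diff_1 add.commute le_trans mult_Suc one_le_numeral zero_less_iff_neq_zero not_one_le_zero)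
    have mn1: "m * n - 1 = i + d" using mn n_def by simp
    define a where "a = q ^ n"
    define b where "b = q ^ d"
    have ab: "q ^ (m * n) = a * b" unfolding a_def b_def mn by (simp add: power_add)
    have qmi: "(q ^ m) ^ Suc i = a * b" using ab n_def by (simp only: power_mult[symmetric] mult.commute)
    have N: "qpoch_inf (q ^ (m * n)) (q ^ m) = PF (q ^ m) i"
      unfolding qpoch_inf_def PF_def n_def
      by (simp add: power_mult[symmetric] power_add[symmetric] algebra_simps)
    have D1: "qpoch_inf (q ^ (m * n)) q = PF q (i + d)"
      unfolding qpoch_inf_def PF_def mn1[symmetric]
    proof (intro arg_cong[where f=prodinf] ext)
      fix k
      have "Suc (k + (m * n - 1)) = m * n + k" using mn n_def by simp
      thus "1 - q ^ (m * n) * q ^ k = 1 - q ^ Suc (k + (m * n - 1))"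
        by (simp only: power_add)
    qed
    have D2: "(1 - q ^ n) * qpoch (q ^ (n + 1)) q d
        = (\<Prod>k<d. 1 - q ^ Suc (k + i)) * (1 - a * b)"
    proof -
      have "(\<Prod>k<Suc d. 1 - q ^ (n + k)) = (1 - q ^ n) * qpoch (q ^ (n + 1)) q d"
        unfolding qpoch_def prod.lessThan_Suc_shift by (simp add: power_add mult_ac)
      moreover have "(\<Prod>k<Suc d. 1 - q ^ (n + k)) = (\<Prod>k<d. 1 - q ^ Suc (k + i)) * (1 - a * b)"
        unfolding prod.lessThan_Suc a_def b_def n_def by (simp add: power_add[symmetric] add_ac)
      ultimately show ?thesis by simp
    qed
    have den: "(1 - q ^ n) * qpoch (q ^ (n + 1)) q d * qpoch_inf (q ^ (m * n)) q
        = (1 - a * b) * PF q i"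
      unfolding D2 D1 PF_split[OF assms(2), of i d] by simp
    have X: "PF (q ^ m) i = (1 - a * b) * PF (q ^ m) (Suc i)"
      using PF_Suc[OF qm, of i] qmi by simp
    have Y: "PF q i = (1 - a) * PF q (Suc i)"
      using PF_Suc[OF assms(2), of i] by (simp add: a_def n_def)
    have nzY: "PF q (Suc i) \<noteq> 0" by (rule PF_nz[OF assms(2)])
    have nza: "1 - a \<noteq> 0" using F_nz[OF assms(2), of i] by (simp add: a_def n_def)
    have nzab: "1 - a * b \<noteq> 0" using F_nz[OF qm, of i] qmi by simp
    have "(let n = Suc i in
            q ^ n * (1 - q ^ ((m - 1) * n)) * qpoch_inf (q ^ (m * n)) (q ^ m)
            / ((1 - q ^ n) * qpoch (q ^ (n + 1)) q ((m - 1) * n) * qpoch_inf (q ^ (m * n)) q))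
        = a * (1 - b) * PF (q ^ m) i / ((1 - a * b) * PF q i)"
      unfolding Let_def n_def[symmetric] d_def[symmetric] den N by (simp add: a_def b_def)
    also have "\<dots> = A i - A (Suc i)"
      unfolding A_def X Y using alg[OF nzY nza nzab] by simp
    finally show ?thesis .
  qed
  have ce: "-1 + qpoch_inf (q ^ m) (q ^ m) / qpoch_inf q q = A 0 - 1"
    unfolding A0 by (rule uminus_add_conv_diff)
  have X: "(\<lambda>i. A i - A (Suc i)) sums (-1 + qpoch_inf (q ^ m) (q ^ m) / qpoch_inf q q)"
    unfolding ce by (rule tel)
  show ?thesis
    apply (rule iffD2[OF sums_cong[where g="\<lambda>i. A i - A (Suc i)"]])
     apply (rule tm)
    apply (rule X)
    done
qed

end
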